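(* Let $0<q<1$. For every $n\in\mathbb Z$, the quantity $a:=\langle n|\sum_{x\in\mathbb Z}S^1_x|n-1\rangle$ is finite, independent of $n$, and equal to $$a=\frac12\sum_{k\ge0}(-1)^kq^{k(k+1)}\,\frac{1+q^{1+2k}}{1-q^{1+2k}}.$$
   Context: Fix $0<q<1$, related to the anisotropy by $q+q^{-1}=2\Delta$ with $\Delta>1$. Let $\Omega^{+-}=\bigotimes_{x\le0}|\!\uparrow\rangle\otimes\bigotimes_{x>0}|\!\downarrow\rangle$, and let $\mathcal H$ be the incomplete tensor product space generated from it. Define the grand-canonical vector $$\psi(z)=\prod_{x\le0}(1+z^{-1}q^{-x}S^-_x)\prod_{x\ge1}(1+zq^{x}S^+_x)\,\Omega^{+-}$$ for $z\neq0$. Expand it as $\psi(z)=\sum_{n\in\mathbb Z}\psi_nz^n$. Explicitly, $\psi_n$ is the sum, over finite sets $A\subset\{x\le0\}$ and $B\subset\{x\ge1\}$ with $|B|-|A|=n$, of $\prod_{x\in A}q^{|x|}\prod_{y\in B}q^{y}$ times the vector obtained from $\Omega^{+-}$ by flipping the spins in $A\cup B$. The vector $\psi_n$ has renormalized total $S^3$ equal to $n$. The kink ground states are $|n\rangle=\psi_n/\|\psi_n\|$, $n\in\mathbb Z$. $S^1_x=\tfrac12(S^+_x+S^-_x)$. *)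

theory Defs
  imports "HOL-Analysis.Analysis"
begin

text \<open>Incomplete tensor product space generated by Omega^{+-}: orthonormal basis e_F indexed
by the finite sets F of flipped sites (relative to Omega^{+-}). A vector is represented by its
(real) coefficient function on int set; only finite F carry coefficients.\<close>

definition configs :: "int set set" where
  "configs = {F. finite F}"

definition ip :: "(int set \<Rightarrow> real) \<Rightarrow> (int set \<Rightarrow> real) \<Rightarrow> real" where
  "ip u v = (\<Sum>\<^sub>\<infinity>F\<in>configs. u F * v F)"

definition hnorm :: "(int set \<Rightarrow> real) \<Rightarrow> real" where
  "hnorm v = sqrt (ip v v)"

definition flip :: "int \<Rightarrow> int set \<Rightarrow> int set" where
  "flip x F = (if x \<in> F then F - {x} else insert x F)"

definition spin_up :: "int \<Rightarrow> int set \<Rightarrow> bool" where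
  "spin_up x F = ((x \<le> 0) = (x \<notin> F))"

text \<open>S^+_x e_F = e_{flip x F} if spin at x is down in F, else 0; S^-_x analogously.\<close>
definition Splus :: "int \<Rightarrow> (int set \<Rightarrow> real) \<Rightarrow> (int set \<Rightarrow> real)" where
  "Splus x v = (\<lambda>G. if spin_up x G then v (flip x G) else 0)"

definition Sminus :: "int \<Rightarrow> (int set \<Rightarrow> real) \<Rightarrow> (int set \<Rightarrow> real)" where
  "Sminus x v = (\<lambda>G. if \<not> spin_up x G then v (flip x G) else 0)"

definition S1 :: "int \<Rightarrow> (int set \<Rightarrow> real) \<Rightarrow> (int set \<Rightarrow> real)" where
  "S1 x v = (\<lambda>G. (Splus x v G + Sminus x v G) / 2)"

text \<open>Renormalized total S^3 of e_F: |F \<inter> {x\<ge>1}| - |F \<inter> {x\<le>0}|.\<close>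
definition charge :: "int set \<Rightarrow> int" where
  "charge F = int (card {x\<in>F. x \<ge> 1}) - int (card {x\<in>F. x \<le> 0})"

definition weight :: "real \<Rightarrow> int set \<Rightarrow> real" where
  "weight q F = (\<Prod>x\<in>F. q ^ nat \<bar>x\<bar>)"

text \<open>psi_n: coefficient of z^n in psi(z).\<close>
definition psi :: "real \<Rightarrow> int \<Rightarrow> (int set \<Rightarrow> real)" where
  "psi q n = (\<lambda>F. if finite F \<and> charge F = n then weight q F else 0)"

definition ket :: "real \<Rightarrow> int \<Rightarrow> (int set \<Rightarrow> real)" where
  "ket q n = (\<lambda>F. psi q n F / hnorm (psi q n))"

end

theory Submission
  imports Defs
begin



lemma S1_eq: "S1 x v G = v (flip x G) / 2"
  by (simp add: S1_def Splus_def Sminus_def)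

lemma flip_flip[simp]: "flip x (flip x F) = F"
  by (auto simp: flip_def)

lemma finite_flip[simp]: "finite (flip x F) = finite F"
  by (auto simp: flip_def)

lemma bij_flip: "bij_betw (flip x) configs configs"
  by (rule bij_betwI[where g="flip x"]) (auto simp: configs_def)

lemma weight_nonneg: "0 < q \<Longrightarrow> 0 \<le> weight q F"
  by (simp add: weight_def prod_nonneg)

lemma weight_pos: "0 < q \<Longrightarrow> 0 < weight q F"
  by (simp add: weight_def prod_pos)

lemma geo_inj_bound:
  fixes q :: real
  assumes q: "0 < q" "q < 1" and S: "finite S" and inj: "inj_on f S"
  shows "(\<Sum>x\<in>S. q ^ f x) \<le> 1 / (1 - q)"
proof -
  have "(\<Sum>x\<in>S. q ^ f x) = (\<Sum>k\<in>f ` S. q ^ k)"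
    using sum.reindex[OF inj, of "\<lambda>k. q^k"] by (simp add: o_def)
  also have "\<dots> \<le> (\<Sum>k. q ^ k)"
    by (rule sum_le_suminf) (use q S in auto)
  also have "\<dots> = 1 / (1 - q)"
    using suminf_geometric[of q] q by simp
  finally show ?thesis .
qed

definition enc :: "int \<Rightarrow> nat" where
  "enc x = (if x \<ge> 0 then nat (2*x) else nat (-2*x-1))"

lemma inj_enc: "inj enc"
proof (rule injI)
  fix x y assume "enc x = enc y"
  then have "(if x \<ge> 0 then 2*x else -2*x-1) = (if y \<ge> 0 then 2*y else -2*y-1)"
    unfolding enc_def by (auto split: if_splits)
  then show "x = y" by (auto split: if_splits) presburger+
qed

lemma sum_sq_bound:
  fixes q :: real
  assumes q: "0 < q" "q < 1" and S: "finite S"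
  shows "(\<Sum>x\<in>S. (q ^ nat \<bar>x\<bar>)^2) \<le> 1 / (1 - q)"
proof -
  have "(\<Sum>x\<in>S. (q ^ nat \<bar>x\<bar>)^2) \<le> (\<Sum>x\<in>S. q ^ enc x)"
  proof (rule sum_mono)
    fix x assume "x \<in> S"
    have "enc x \<le> 2 * nat \<bar>x\<bar>" unfolding enc_def by auto
    hence "q ^ (2 * nat \<bar>x\<bar>) \<le> q ^ enc x"
      using q by (intro power_decreasing) auto
    thus "(q ^ nat \<bar>x\<bar>)^2 \<le> q ^ enc x"
      by (simp add: power_mult[symmetric] mult.commute)
  qed
  also have "\<dots> \<le> 1 / (1 - q)"
    by (rule geo_inj_bound[OF q S]) (meson inj_enc inj_on_subset subset_UNIV)
  finally show ?thesis .
qed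

lemma weight_sq: "weight q F ^ 2 = (\<Prod>x\<in>F. (q ^ nat \<bar>x\<bar>)^2)"
  by (simp add: weight_def prod_power_distrib)

lemma sum_Pow_rho:
  fixes q :: real
  assumes S: "finite S"
  shows "(\<Sum>F\<in>Pow S. weight q F ^ 2) = (\<Prod>x\<in>S. (q ^ nat \<bar>x\<bar>)^2 + 1)"
  using prod_add[OF S, of "\<lambda>x. (q ^ nat \<bar>x\<bar>)^2" "\<lambda>_. 1"] by (simp add: weight_sq)

lemma rho_summable:
  fixes q :: real
  assumes q: "0 < q" "q < 1"
  shows "(\<lambda>F. weight q F ^ 2) summable_on configs"
proof (rule nonneg_bdd_above_summable_on)
  show "bdd_above (sum (\<lambda>F. weight q F ^ 2) ` {FF. FF \<subseteq> configs \<and> finite FF})"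
  proof (rule bdd_aboveI2)
    fix FF assume FF: "FF \<in> {FF. FF \<subseteq> configs \<and> finite FF}"
    define S where "S = \<Union>FF"
    have S: "finite S" using FF by (auto simp: S_def configs_def)
    have "sum (\<lambda>F. weight q F ^ 2) FF \<le> (\<Sum>F\<in>Pow S. weight q F ^ 2)"
      by (rule sum_mono2) (use S FF in \<open>auto simp: S_def\<close>)
    also have "\<dots> = (\<Prod>x\<in>S. (q ^ nat \<bar>x\<bar>)^2 + 1)" by (rule sum_Pow_rho[OF S])
    also have "\<dots> \<le> (\<Prod>x\<in>S. exp ((q ^ nat \<bar>x\<bar>)^2))"
      by (rule prod_mono) (auto simp: add.commute)
    also have "\<dots> = exp (\<Sum>x\<in>S. (q ^ nat \<bar>x\<bar>)^2)" by (simp add: exp_sum[OF S])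
    also have "\<dots> \<le> exp (1 / (1 - q))"
      using sum_sq_bound[OF q S] by simp
    finally show "sum (\<lambda>F. weight q F ^ 2) FF \<le> exp (1 / (1 - q))" .
  qed
qed simp




definition sg :: "int \<Rightarrow> int" where "sg x = (if x \<ge> 1 then 1 else -1)"
definition En :: "int set \<Rightarrow> int" where "En F = (\<Sum>x\<in>F. \<bar>x\<bar>)"

lemma charge_sum: "finite F \<Longrightarrow> charge F = (\<Sum>x\<in>F. sg x)"
proof -
  assume F: "finite F"
  have 1: "int (card {x\<in>F. x \<ge> 1}) = (\<Sum>x\<in>F. if x \<ge> 1 then 1 else 0)"
    using sum.inter_filter[OF F, of "\<lambda>_. (1::int)" "\<lambda>x. x \<ge> 1"] by simp
  have 2: "int (card {x\<in>F. x \<le> 0}) = (\<Sum>x\<in>F. if x \<le> 0 then 1 else 0)"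
    using sum.inter_filter[OF F, of "\<lambda>_. (1::int)" "\<lambda>x. x \<le> 0"] by simp
  show ?thesis unfolding charge_def 1 2 sum_subtractf[symmetric]
    by (rule sum.cong) (auto simp: sg_def)
qed

lemma sum_flip:
  fixes h :: "int \<Rightarrow> 'b::ab_group_add"
  assumes "finite A"
  shows "(\<Sum>y\<in>flip x A. h y) = (\<Sum>y\<in>A. h y) + (if x \<in> A then - h x else h x)"
  using assms by (auto simp: flip_def sum.remove sum.insert)

lemma weight_powr: "0 < q \<Longrightarrow> weight q F = q powr (of_int (En F))"
proof -
  assume q: "0 < q"
  have "weight q F = (\<Prod>x\<in>F. q powr (of_int \<bar>x\<bar>))"
    unfolding weight_def
    by (rule prod.cong) (use q in \<open>auto simp: powr_realpow[symmetric]\<close>)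
  also have "\<dots> = q powr (\<Sum>x\<in>F. of_int \<bar>x\<bar>)"
    using q by (simp add: powr_sum)
  finally show ?thesis by (simp add: En_def)
qed

definition sh :: "int set \<Rightarrow> int set" where "sh F = (\<lambda>x. x + 1) ` F"
definition tau :: "int set \<Rightarrow> int set" where "tau F = flip 1 (sh F)"

lemma sum_sh: "(\<Sum>y\<in>sh F. h y) = (\<Sum>x\<in>F. h (x + 1))"
  unfolding sh_def by (subst sum.reindex) (auto simp: inj_on_def)

lemma finite_sh[simp]: "finite (sh F) = finite F"
  unfolding sh_def by (auto simp: finite_image_iff inj_on_def)

lemma one_in_sh: "(1 \<in> sh F) = (0 \<in> F)"
  unfolding sh_def by force

lemma charge_tau: "finite F \<Longrightarrow> charge (tau F) = charge F + 1"
proof -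
  assume F: "finite F"
  have "charge (tau F) = (\<Sum>x\<in>F. sg (x+1)) + (if 0 \<in> F then -1 else 1)"
    unfolding tau_def using F
    by (simp add: charge_sum sum_flip sum_sh one_in_sh sg_def)
  also have "(\<Sum>x\<in>F. sg (x+1)) = (\<Sum>x\<in>F. sg x + (if x = 0 then 2 else 0))"
    by (rule sum.cong) (auto simp: sg_def)
  also have "\<dots> = charge F + (if 0 \<in> F then 2 else 0)"
    using F by (simp add: sum.distrib charge_sum)
  finally show ?thesis by simp
qed

lemma En_tau: "finite F \<Longrightarrow> En (tau F) = En F + charge F + 1"
proof -
  assume F: "finite F"
  have "En (tau F) = (\<Sum>x\<in>F. \<bar>x+1\<bar>) + (if 0 \<in> F then -1 else 1)"
    unfolding tau_def En_def using F
    by (simp add: sum_flip sum_sh one_in_sh)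
  also have "(\<Sum>x\<in>F. \<bar>x+1\<bar>) = (\<Sum>x\<in>F. (\<bar>x\<bar> + sg x) + (if x = 0 then 2 else 0))"
    by (rule sum.cong) (auto simp: sg_def)
  also have "\<dots> = En F + charge F + (if 0 \<in> F then 2 else 0)"
    using F by (simp add: sum.distrib charge_sum En_def)
  finally show ?thesis by simp
qed

lemma flip_comm: "flip a (flip b A) = flip b (flip a A)"
  by (auto simp: flip_def)

lemma sh_flip: "sh (flip x G) = flip (x+1) (sh G)"
  by (auto simp: sh_def flip_def)

lemma tau_flip: "tau (flip x G) = flip (x+1) (tau G)"
  by (simp add: tau_def sh_flip flip_comm)

lemma bij_tau: "bij_betw tau configs configs"
proof (rule bij_betwI[where g="\<lambda>G. (\<lambda>x. x - 1) ` (flip 1 G)"])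
  show "tau \<in> configs \<rightarrow> configs" by (auto simp: configs_def tau_def)
  show "(\<lambda>G. (\<lambda>x. x - 1) ` flip 1 G) \<in> configs \<rightarrow> configs" by (auto simp: configs_def)
  show "(\<lambda>x. x - 1) ` flip 1 (tau F) = F" for F
    by (simp add: tau_def sh_def image_image)
  show "tau ((\<lambda>x. x - 1) ` flip 1 G) = G" for G
    by (simp add: tau_def sh_def image_image)
qed

lemma weight_tau:
  assumes q: "0 < q" and F: "finite F"
  shows "weight q (tau F) = weight q F * q powr (of_int (charge F + 1))"
  using q F by (simp add: weight_powr En_tau powr_add[symmetric] add.assoc)

lemma charge_insert: "finite H \<Longrightarrow> x \<notin> H \<Longrightarrow> charge (insert x H) = charge H + sg x"
  by (simp add: charge_sum)

lemma weight_insert: "finite H \<Longrightarrow> x \<notin> H \<Longrightarrow> weight q (insert x H) = q ^ nat \<bar>x\<bar> * weight q H"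
  by (simp add: weight_def)

lemma charge_remove: "finite H \<Longrightarrow> x \<in> H \<Longrightarrow> charge (H - {x}) = charge H - sg x"
  by (simp add: charge_sum sum_diff1)




definition Nn :: "real \<Rightarrow> int \<Rightarrow> real" where
  "Nn q n = infsum (\<lambda>F. if charge F = n then weight q F ^ 2 else 0) configs"

definition Mm :: "real \<Rightarrow> int \<Rightarrow> int \<Rightarrow> real" where
  "Mm q n x = infsum (\<lambda>F. if charge F = n \<and> x \<notin> F then weight q F ^ 2 else 0) configs"

lemma dom_summable:
  fixes q :: real
  assumes q: "0 < q" "q < 1"
  assumes b: "\<And>F. F \<in> configs \<Longrightarrow> \<bar>g F\<bar> \<le> C * weight q F ^ 2"
  shows "g summable_on configs"
proof -
  have "(\<lambda>F. C * weight q F ^ 2) summable_on configs"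
    by (rule summable_on_cmult_right[OF rho_summable[OF q]])
  hence "(\<lambda>F. norm (g F)) summable_on configs"
    by (rule Infinite_Sum.abs_summable_on_comparison_test') (use b in simp)
  thus ?thesis using summable_on_iff_abs_summable_on_real[of g configs] by simp
qed

lemma ip_psi: "ip (psi q n) (psi q n) = Nn q n"
  unfolding ip_def Nn_def
  by (rule infsum_cong) (auto simp: psi_def configs_def power2_eq_square)

lemma Nn_shift:
  assumes q: "0 < q"
  shows "Nn q (n+1) = q powr (of_int (2*(n+1))) * Nn q n"
proof -
  let ?f = "\<lambda>F. if charge F = n + 1 then weight q F ^ 2 else 0"
  have "Nn q (n+1) = infsum (\<lambda>F. ?f (tau F)) configs"
    unfolding Nn_def by (rule infsum_reindex_bij_betw[OF bij_tau, symmetric])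
  also have "\<dots> = infsum (\<lambda>F. q powr (of_int (2*(n+1))) * (if charge F = n then weight q F ^ 2 else 0)) configs"
  proof (rule infsum_cong)
    fix F assume "F \<in> configs"
    hence F: "finite F" by (simp add: configs_def)
    have "(q powr (of_int (charge F + 1)))^2 = q powr (of_int (2*(charge F+1)))"
      by (simp add: power2_eq_square powr_add[symmetric])
    thus "?f (tau F) = q powr (of_int (2*(n+1))) * (if charge F = n then weight q F ^ 2 else 0)"
      using F q by (auto simp: charge_tau weight_tau power_mult_distrib)
  qed
  also have "\<dots> = q powr (of_int (2*(n+1))) * Nn q n"
    unfolding Nn_def by (rule infsum_cmult_right')
  finally show ?thesis .
qed

lemma Nn_formula:
  assumes q: "0 < q"
  shows "Nn q n = q powr (of_int (n*(n+1))) * Nn q 0"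
proof (induction n rule: int_induct[where k=0])
  case base
  then show ?case using q by simp
next
  case (step1 i)
  have "Nn q (i+1) = q powr (of_int (2*(i+1))) * (q powr (of_int (i*(i+1))) * Nn q 0)"
    using Nn_shift[OF q, of i] step1 by simp
  also have "\<dots> = q powr (of_int ((i+1)*(i+1+1))) * Nn q 0"
    by (simp add: powr_add[symmetric] algebra_simps)
  finally show ?case .
next
  case (step2 i)
  have "Nn q i = q powr (of_int (2*i)) * Nn q (i-1)"
    using Nn_shift[OF q, of "i-1"] by simp
  hence "Nn q (i-1) = Nn q i / q powr (of_int (2*i))"
    using q by (simp add: field_simps)
  also have "\<dots> = q powr (of_int (i*(i+1)) - of_int (2*i)) * Nn q 0"
    using step2 q by (simp add: powr_diff)
  also have "of_int (i*(i+1)) - of_int (2*i) = (of_int ((i-1)*(i-1+1)) :: real)"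
    by (simp add: algebra_simps)
  finally show ?case .
qed

lemma Nn_nonneg: "0 \<le> Nn q n"
  unfolding Nn_def by (rule infsum_nonneg) auto

lemma Nn0_ge1:
  assumes q: "0 < q" "q < 1"
  shows "1 \<le> Nn q 0"
proof -
  let ?g = "\<lambda>F. if charge F = 0 then weight q F ^ 2 else 0"
  have s: "?g summable_on configs"
    by (rule dom_summable[OF q, where C=1]) (auto)
  have "infsum ?g {{}} \<le> infsum ?g configs"
    by (rule infsum_mono_neutral[OF _ s]) (auto simp: configs_def)
  moreover have "infsum ?g {{}} = 1"
    by (simp add: charge_def weight_def)
  ultimately show ?thesis unfolding Nn_def by simp
qed

lemma Nn_pos:
  assumes q: "0 < q" "q < 1"
  shows "0 < Nn q n"
  using Nn_formula[OF q(1), of n] Nn0_ge1[OF q] q by simp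

lemma hnorm_psi: "hnorm (psi q n) = sqrt (Nn q n)"
  by (simp add: hnorm_def ip_psi)

lemma psi_tau:
  assumes q: "0 < q" and F: "finite F"
  shows "psi q (n+1) (tau F) = q powr (of_int (n+1)) * psi q n F"
proof -
  have "finite (tau F)" using F by (simp add: tau_def)
  thus ?thesis using F q by (auto simp: psi_def charge_tau weight_tau)
qed

lemma ket_tau:
  assumes q: "0 < q" "q < 1" and F: "finite F"
  shows "ket q (n+1) (tau F) = ket q n F"
proof -
  have "sqrt (Nn q (n+1)) = sqrt ((q powr (of_int (n+1)))^2 * Nn q n)"
    using Nn_shift[OF q(1), of n] by (simp add: power2_eq_square powr_add[symmetric])
  also have "\<dots> = q powr (of_int (n+1)) * sqrt (Nn q n)"
    using q by (simp add: real_sqrt_mult)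
  finally have h: "sqrt (Nn q (n+1)) = q powr (of_int (n+1)) * sqrt (Nn q n)" .
  show ?thesis
    unfolding ket_def hnorm_psi h psi_tau[OF q(1) F] using q by simp
qed

definition aa :: "real \<Rightarrow> int \<Rightarrow> int \<Rightarrow> real" where
  "aa q x n = ip (ket q n) (S1 x (ket q (n - 1)))"

lemma aa_eq: "aa q x n = infsum (\<lambda>G. ket q n G * ket q (n-1) (flip x G) / 2) configs"
  unfolding aa_def ip_def S1_eq by simp

lemma aa_shift:
  assumes q: "0 < q" "q < 1"
  shows "aa q (x+1) (n+1) = aa q x n"
proof -
  let ?f = "\<lambda>G. ket q (n+1) G * ket q (n+1-1) (flip (x+1) G) / 2"
  have "aa q (x+1) (n+1) = infsum (\<lambda>G. ?f (tau G)) configs"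
    unfolding aa_eq by (rule infsum_reindex_bij_betw[OF bij_tau, symmetric])
  also have "\<dots> = aa q x n"
    unfolding aa_eq
  proof (rule infsum_cong)
    fix G assume "G \<in> configs"
    hence G: "finite G" by (simp add: configs_def)
    have "ket q n (tau (flip x G)) = ket q (n-1) (flip x G)"
      using ket_tau[OF q, of "flip x G" "n-1"] G by simp
    moreover have "flip (x+1) (tau G) = tau (flip x G)" by (rule tau_flip[symmetric])
    moreover have "ket q (n+1) (tau G) = ket q n G" by (rule ket_tau[OF q G])
    ultimately show "?f (tau G) = ket q n G * ket q (n-1) (flip x G) / 2"
      by (simp only: add_diff_cancel_right')
  qed
  finally show ?thesis .
qed




lemma rho_summ_if:
  fixes q :: real
  assumes q: "0 < q" "q < 1"
  shows "(\<lambda>F. if P F then weight q F ^ 2 else 0) summable_on configs"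
  by (rule dom_summable[OF q, where C=1]) auto

lemma Mm_rec:
  fixes q :: real
  assumes q: "0 < q" "q < 1"
  shows "Nn q n = Mm q n x + (q ^ nat \<bar>x\<bar>)^2 * Mm q (n - sg x) x"
proof -
  let ?g1 = "\<lambda>F. if charge F = n \<and> x \<notin> F then weight q F ^ 2 else 0"
  let ?g2 = "\<lambda>F. if charge F = n \<and> x \<in> F then weight q F ^ 2 else 0"
  have "Nn q n = infsum (\<lambda>F. ?g1 F + ?g2 F) configs"
    unfolding Nn_def by (rule infsum_cong) auto
  also have "\<dots> = infsum ?g1 configs + infsum ?g2 configs"
    by (rule infsum_add) (rule rho_summ_if[OF q])+
  also have "infsum ?g2 configs = infsum (\<lambda>H. ?g2 (flip x H)) configs"
    by (rule infsum_reindex_bij_betw[OF bij_flip, symmetric])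
  also have "\<dots> = infsum (\<lambda>H. (q ^ nat \<bar>x\<bar>)^2 * (if charge H = n - sg x \<and> x \<notin> H then weight q H ^ 2 else 0)) configs"
  proof (rule infsum_cong)
    fix H assume "H \<in> configs"
    hence H: "finite H" by (simp add: configs_def)
    show "?g2 (flip x H) = (q ^ nat \<bar>x\<bar>)^2 * (if charge H = n - sg x \<and> x \<notin> H then weight q H ^ 2 else 0)"
    proof (cases "x \<in> H")
      case True
      then show ?thesis by (simp add: flip_def)
    next
      case False
      then show ?thesis using H
        by (auto simp: flip_def charge_insert weight_insert power_mult_distrib)
    qed
  qed
  also have "\<dots> = (q ^ nat \<bar>x\<bar>)^2 * Mm q (n - sg x) x"
    unfolding Mm_def by (rule infsum_cmult_right')
  finally show ?thesis by (simp add: Mm_def)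
qed

lemma Mm_bounds:
  fixes q :: real
  assumes q: "0 < q" "q < 1"
  shows "0 \<le> Mm q n x" "Mm q n x \<le> Nn q n"
proof -
  show "0 \<le> Mm q n x" unfolding Mm_def by (rule infsum_nonneg) auto
  show "Mm q n x \<le> Nn q n" unfolding Mm_def Nn_def
    by (rule infsum_mono[OF rho_summ_if[OF q] rho_summ_if[OF q]]) auto
qed

lemma alt_sums:
  fixes u v :: "nat \<Rightarrow> real"
  assumes rec: "\<And>k. v k = u k + c * u (Suc k)" and c: "\<bar>c\<bar> \<le> 1" and u: "u \<longlonglongrightarrow> 0"
  shows "(\<lambda>j. (-c)^j * v j) sums u 0"
proof -
  have eq: "u 0 = (\<Sum>j<k. (-c)^j * v j) + (-c)^k * u k" for k
  proof (induction k)
    case 0 then show ?case by simp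
  next
    case (Suc k)
    have "(-c)^k * u k = (-c)^k * v k + (-c)^(Suc k) * u (Suc k)"
      using rec[of k] by (simp add: algebra_simps)
    then show ?case using Suc by simp
  qed
  have "(\<lambda>k. (-c)^k * u k) \<longlonglongrightarrow> 0"
  proof (rule Lim_null_comparison[where g="\<lambda>k. \<bar>u k\<bar>"])
    show "\<forall>\<^sub>F k in sequentially. norm ((-c)^k * u k) \<le> \<bar>u k\<bar>"
    proof (rule always_eventually, rule allI)
      fix k
      have "\<bar>(-c)^k\<bar> \<le> 1" using c by (simp add: power_abs power_le_one)
      hence "\<bar>(-c)^k\<bar> * \<bar>u k\<bar> \<le> 1 * \<bar>u k\<bar>" by (rule mult_right_mono) simp
      thus "norm ((-c)^k * u k) \<le> \<bar>u k\<bar>" by (simp add: abs_mult)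
    qed
    show "(\<lambda>k. \<bar>u k\<bar>) \<longlonglongrightarrow> 0" using tendsto_rabs_zero[OF u] .
  qed
  hence "(\<lambda>k. u 0 - (-c)^k * u k) \<longlonglongrightarrow> u 0 - 0"
    by (intro tendsto_diff tendsto_const)
  moreover have "(\<lambda>k. u 0 - (-c)^k * u k) = (\<lambda>k. \<Sum>j<k. (-c)^j * v j)"
    using eq by (auto simp: algebra_simps)
  ultimately show ?thesis unfolding sums_def by simp
qed

lemma Nn_tendsto:
  fixes q :: real
  assumes q: "0 < q" "q < 1" and d: "d = 1 \<or> d = -1"
  shows "(\<lambda>k. Nn q (n + d * int k)) \<longlonglongrightarrow> 0"
proof (rule Lim_null_comparison[where g="\<lambda>k. Nn q 0 * q powr (- \<bar>of_int n\<bar> - 1) * q ^ k"])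
  show "\<forall>\<^sub>F k in sequentially. norm (Nn q (n + d * int k)) \<le> Nn q 0 * q powr (- \<bar>of_int n\<bar> - 1) * q ^ k"
  proof (rule always_eventually, rule allI)
    fix k
    define m where "m = n + d * int k"
    have sq1: "0 \<le> m * m" by simp
    have sq2: "0 \<le> (m+1) * (m+1)" by simp
    have m1: "m * (m+1) \<ge> m" "m * (m+1) \<ge> -m - 1"
      using sq1 sq2 by (simp_all add: algebra_simps)
    have "\<bar>m\<bar> \<ge> int k - \<bar>n\<bar>" using d unfolding m_def by auto
    hence exi: "- \<bar>n\<bar> - 1 + int k \<le> m*(m+1)"
      using m1 by (cases "m \<ge> 0") (simp_all add: abs_if split: if_splits)
    hence "real_of_int (- \<bar>n\<bar> - 1 + int k) \<le> real_of_int (m*(m+1))"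
      by (simp only: of_int_le_iff)
    hence ex: "real_of_int (m*(m+1)) \<ge> - \<bar>of_int n\<bar> - 1 + real k"
      by simp
    have "q powr (of_int (m*(m+1))) \<le> q powr (- \<bar>of_int n\<bar> - 1 + real k)"
      by (rule powr_mono'[OF ex]) (use q in auto)
    also have "\<dots> = q powr (- \<bar>of_int n\<bar> - 1) * q ^ k"
      using q by (simp add: powr_add powr_realpow)
    finally have "q powr (of_int (m*(m+1))) \<le> q powr (- \<bar>of_int n\<bar> - 1) * q ^ k" .
    hence "Nn q 0 * q powr (of_int (m*(m+1))) \<le> Nn q 0 * (q powr (- \<bar>of_int n\<bar> - 1) * q ^ k)"
      by (rule mult_left_mono) (rule Nn_nonneg)
    thus "norm (Nn q (n + d * int k)) \<le> Nn q 0 * q powr (- \<bar>of_int n\<bar> - 1) * q ^ k"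
      using Nn_formula[OF q(1), of m] Nn_nonneg[of q m] unfolding m_def[symmetric]
      by (simp add: mult.commute mult.left_commute)
  qed
  show "(\<lambda>k. Nn q 0 * q powr (- \<bar>of_int n\<bar> - 1) * q ^ k) \<longlonglongrightarrow> 0"
    using q by (intro tendsto_mult_right_zero LIMSEQ_power_zero) auto
qed

lemma Mm_sums:
  fixes q :: real and x :: int
  assumes q: "0 < q" "q < 1"
  defines "n0 \<equiv> (if x \<ge> 1 then -1 else 0 :: int)"
  shows "(\<lambda>j. (- ((q ^ nat \<bar>x\<bar>)^2))^j * (q ^ (j*(j+1)) * Nn q 0)) sums Mm q n0 x"
proof -
  define d where "d = - sg x"
  have d: "d = 1 \<or> d = -1" by (simp add: d_def sg_def)
  define c where "c = (q ^ nat \<bar>x\<bar>)^2"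
  have c: "\<bar>c\<bar> \<le> 1" using q by (simp add: c_def power_le_one)
  let ?u = "\<lambda>k. Mm q (n0 + d * int k) x"
  let ?v = "\<lambda>k. Nn q (n0 + d * int k)"
  have rec: "?v k = ?u k + c * ?u (Suc k)" for k
    using Mm_rec[OF q, of "n0 + d * int k" x] by (simp add: c_def d_def algebra_simps)
  have u: "?u \<longlonglongrightarrow> 0"
  proof (rule real_tendsto_sandwich[of "\<lambda>_. 0" _ _ ?v])
    show "\<forall>\<^sub>F k in sequentially. 0 \<le> ?u k" using Mm_bounds[OF q] by simp
    show "\<forall>\<^sub>F k in sequentially. ?u k \<le> ?v k" using Mm_bounds[OF q] by simp
  qed (use Nn_tendsto[OF q d] in auto)
  have s: "(\<lambda>j. (-c)^j * ?v j) sums ?u 0" by (rule alt_sums[OF rec c u])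
  have v: "?v j = q ^ (j*(j+1)) * Nn q 0" for j
  proof -
    have "n0 + d * int j = (if x \<ge> 1 then - 1 - int j else int j)"
      by (simp add: n0_def d_def sg_def)
    hence "(n0 + d * int j) * (n0 + d * int j + 1) = int (j*(j+1))"
      by (auto simp: algebra_simps)
    hence "q powr (of_int ((n0 + d * int j) * (n0 + d * int j + 1))) = q powr (real (j*(j+1)))"
      by (metis of_int_of_nat_eq)
    also have "\<dots> = q ^ (j*(j+1))" by (rule powr_realpow[OF q(1)])
    finally have "q powr (of_int ((n0 + d * int j) * (n0 + d * int j + 1))) = q ^ (j*(j+1))" .
    thus ?thesis using Nn_formula[OF q(1), of "n0 + d * int j"] by simp
  qed
  show ?thesis using s unfolding v c_def by simp
qed




lemma ket_eq: "ket q n G = psi q n G / sqrt (Nn q n)"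
  by (simp add: ket_def hnorm_psi)

lemma psi_prod_eq:
  fixes q :: real and x :: int
  assumes q: "0 < q" "q < 1"
  defines "n0 \<equiv> (if x \<ge> 1 then -1 else 0 :: int)"
  shows "infsum (\<lambda>G. psi q 0 G * psi q (-1) (flip x G)) configs = q ^ nat \<bar>x\<bar> * Mm q n0 x"
proof (cases "x \<ge> 1")
  case True
  have "infsum (\<lambda>G. psi q 0 G * psi q (-1) (flip x G)) configs
      = infsum (\<lambda>H. psi q 0 (flip x H) * psi q (-1) (flip x (flip x H))) configs"
    by (rule infsum_reindex_bij_betw[OF bij_flip, symmetric])
  also have "\<dots> = infsum (\<lambda>H. q ^ nat \<bar>x\<bar> * (if charge H = n0 \<and> x \<notin> H then weight q H ^ 2 else 0)) configs"
  proof (rule infsum_cong)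
    fix H assume "H \<in> configs"
    hence H: "finite H" by (simp add: configs_def)
    show "psi q 0 (flip x H) * psi q (-1) (flip x (flip x H)) =
          q ^ nat \<bar>x\<bar> * (if charge H = n0 \<and> x \<notin> H then weight q H ^ 2 else 0)"
    proof (cases "x \<in> H")
      case True
      then show ?thesis using H \<open>x \<ge> 1\<close>
        by (auto simp: flip_def psi_def charge_remove sg_def n0_def insert_absorb)
    next
      case False
      then show ?thesis using H \<open>x \<ge> 1\<close>
        by (auto simp: flip_def psi_def charge_insert weight_insert sg_def n0_def power2_eq_square)
    qed
  qed
  also have "\<dots> = q ^ nat \<bar>x\<bar> * Mm q n0 x"
    unfolding Mm_def by (rule infsum_cmult_right')
  finally show ?thesis .
next
  case False
  have "infsum (\<lambda>G. psi q 0 G * psi q (-1) (flip x G)) configs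
      = infsum (\<lambda>H. q ^ nat \<bar>x\<bar> * (if charge H = n0 \<and> x \<notin> H then weight q H ^ 2 else 0)) configs"
  proof (rule infsum_cong)
    fix H assume "H \<in> configs"
    hence H: "finite H" by (simp add: configs_def)
    show "psi q 0 H * psi q (-1) (flip x H) =
          q ^ nat \<bar>x\<bar> * (if charge H = n0 \<and> x \<notin> H then weight q H ^ 2 else 0)"
    proof (cases "x \<in> H")
      case True
      then show ?thesis using H \<open>\<not> x \<ge> 1\<close>
        by (auto simp: flip_def psi_def charge_remove sg_def n0_def insert_absorb)
    next
      case False
      then show ?thesis using H \<open>\<not> x \<ge> 1\<close>
        by (auto simp: flip_def psi_def charge_insert weight_insert sg_def n0_def power2_eq_square)
    qed
  qed
  also have "\<dots> = q ^ nat \<bar>x\<bar> * Mm q n0 x"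
    unfolding Mm_def by (rule infsum_cmult_right')
  finally show ?thesis .
qed

lemma aa0_eq:
  fixes q :: real and x :: int
  assumes q: "0 < q" "q < 1"
  shows "aa q x 0 = q ^ nat \<bar>x\<bar> * Mm q (if x \<ge> 1 then -1 else 0) x / (2 * Nn q 0)"
proof -
  have N1: "Nn q (-1) = Nn q 0" using Nn_formula[OF q(1), of "-1"] q by simp
  have N0: "0 < Nn q 0" by (rule Nn_pos[OF q])
  have "aa q x 0 = infsum (\<lambda>G. psi q 0 G * psi q (-1) (flip x G) * (1 / (2 * Nn q 0))) configs"
    unfolding aa_eq
  proof (rule infsum_cong)
    fix G
    have "sqrt (Nn q 0) * sqrt (Nn q 0) = Nn q 0" using N0 by simp
    thus "ket q 0 G * ket q (0 - 1) (flip x G) / 2 = psi q 0 G * psi q (-1) (flip x G) * (1 / (2 * Nn q 0))"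
      unfolding ket_eq using N1 N0 by (simp add: field_simps)
  qed
  also have "\<dots> = infsum (\<lambda>G. psi q 0 G * psi q (-1) (flip x G)) configs * (1 / (2 * Nn q 0))"
    by (rule infsum_cmult_left')
  also have "\<dots> = q ^ nat \<bar>x\<bar> * Mm q (if x \<ge> 1 then -1 else 0) x / (2 * Nn q 0)"
    using psi_prod_eq[OF q, of x] by simp
  finally show ?thesis .
qed

definition hh :: "real \<Rightarrow> nat \<Rightarrow> nat \<Rightarrow> real" where
  "hh q j m = (-1)^j * q ^ (j*(j+1)) * q ^ (m*(2*j+1))"

lemma aa0_sums:
  fixes q :: real and x :: int
  assumes q: "0 < q" "q < 1"
  shows "(\<lambda>j. hh q j (nat \<bar>x\<bar>) / 2) sums aa q x 0"
proof -
  define m where "m = nat \<bar>x\<bar>"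
  have N0: "0 < Nn q 0" by (rule Nn_pos[OF q])
  have s: "(\<lambda>j. (q ^ m / (2 * Nn q 0)) * ((- ((q ^ m)^2))^j * (q ^ (j*(j+1)) * Nn q 0))) sums
        ((q ^ m / (2 * Nn q 0)) * Mm q (if x \<ge> 1 then -1 else 0) x)"
    by (rule sums_mult) (use Mm_sums[OF q, of x] in \<open>simp add: m_def\<close>)
  have e: "(q ^ m / (2 * Nn q 0)) * ((- ((q ^ m)^2))^j * (q ^ (j*(j+1)) * Nn q 0)) = hh q j m / 2" for j
  proof -
    have f1: "(- ((q ^ m)^2))^j = (-1)^j * q ^ (m*2*j)"
      by (simp only: power_minus[of "(q ^ m)^2" j] power_mult)
    have ex: "m*(2*j+1) = m + m*2*j" by (simp add: algebra_simps)
    have f2: "q ^ m * q ^ (m*2*j) = q ^ (m*(2*j+1))"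
      unfolding ex power_add ..
    have key: "A / (2 * Nn q 0) * (S * B * (C * Nn q 0)) = S * C * (A * B) / 2" for A B C S :: real
      using N0 by (simp add: field_simps)
    show ?thesis unfolding hh_def f1 key f2 ..
  qed
  have s2: "(\<lambda>j. hh q j m / 2) sums ((q ^ m / (2 * Nn q 0)) * Mm q (if x \<ge> 1 then -1 else 0) x)"
    using s unfolding e .
  have A: "aa q x 0 = (q ^ m / (2 * Nn q 0)) * Mm q (if x \<ge> 1 then -1 else 0) x"
    using aa0_eq[OF q, of x] by (simp add: m_def)
  show ?thesis using s2 unfolding A m_def .
qed




lemma geo_has_sum:
  fixes r :: real
  assumes "0 \<le> r" "r < 1"
  shows "((\<lambda>m. r ^ m) has_sum (1 / (1 - r))) UNIV"
  by (rule sums_nonneg_imp_has_sum) (use assms geometric_sums[of r] in auto)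

lemma qpow_lt1:
  fixes q :: real
  assumes q: "0 < q" "q < 1"
  shows "q ^ (2*j+1) < 1" "q ^ (1 + 2*j) < 1"
proof -
  have h0: "q ^ (2*j+1) \<le> q ^ 1" by (rule power_decreasing) (use q in auto)
  hence h: "q ^ (2*j+1) \<le> q" by (simp only: power_one_right)
  show A: "q ^ (2*j+1) < 1" using h q(2) by linarith
  have "1 + 2*j = 2*j+1" by simp
  thus "q ^ (1 + 2*j) < 1" using A by (simp only:)
qed

lemma hh_bound:
  fixes q :: real
  assumes q: "0 < q" "q < 1"
  shows "\<bar>hh q j m\<bar> \<le> q ^ j * q ^ m"
proof -
  have "q ^ (j*(j+1)) \<le> q ^ j"
    by (rule power_decreasing) (use q in \<open>auto simp: algebra_simps\<close>)
  moreover have "q ^ (m*(2*j+1)) \<le> q ^ m"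
    by (rule power_decreasing) (use q in \<open>auto simp: algebra_simps\<close>)
  ultimately show ?thesis unfolding hh_def using q
    by (simp add: abs_mult power_abs mult_mono)
qed

lemma prod_geo_summable:
  fixes q :: real
  assumes q: "0 < q" "q < 1"
  shows "(\<lambda>(j, m). q ^ j * q ^ m) summable_on (UNIV \<times> (UNIV :: nat set))"
proof -
  have "(\<lambda>p. q ^ fst p * q ^ snd p) summable_on Sigma UNIV (\<lambda>_. UNIV)"
  proof (rule summable_on_SigmaI[where g="\<lambda>j. q ^ j * (1 / (1 - q))"])
    show "((\<lambda>m. q ^ fst (j, m) * q ^ snd (j, m)) has_sum q ^ j * (1 / (1 - q))) UNIV" for j
      using has_sum_cmult_right[OF geo_has_sum[of q], of "q ^ j"] q by simp
    show "(\<lambda>j. q ^ j * (1 / (1 - q))) summable_on UNIV"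
      using has_sum_cmult_left[OF geo_has_sum[of q], of "1 / (1 - q)"] q
      by (auto simp: summable_on_def)
  qed (use q in auto)
  thus ?thesis by (simp add: case_prod_beta')
qed

lemma hh_summable2:
  fixes q :: real
  assumes q: "0 < q" "q < 1"
  shows "(\<lambda>(m, j). hh q j (m + s)) summable_on (UNIV \<times> (UNIV :: nat set))"
proof -
  have "(\<lambda>p. norm ((\<lambda>(m, j). hh q j (m + s)) p)) summable_on (UNIV \<times> UNIV)"
  proof (rule Infinite_Sum.abs_summable_on_comparison_test')
    show "(\<lambda>(m, j). q ^ m * q ^ j) summable_on (UNIV \<times> (UNIV :: nat set))"
      by (rule prod_geo_summable[OF q])
    fix p :: "nat \<times> nat"
    obtain m j where p: "p = (m, j)" by (cases p)
    have "\<bar>hh q j (m + s)\<bar> \<le> q ^ j * q ^ (m + s)" by (rule hh_bound[OF q])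
    also have "\<dots> \<le> q ^ j * q ^ m"
      using q by (intro mult_left_mono power_decreasing) auto
    finally show "norm ((\<lambda>(m, j). hh q j (m + s)) p) \<le> (\<lambda>(m, j). q ^ m * q ^ j) p"
      by (simp add: p mult.commute)
  qed
  thus ?thesis using summable_on_iff_abs_summable_on_real by blast
qed

lemma hh_row:
  fixes q :: real
  assumes q: "0 < q" "q < 1"
  shows "((\<lambda>m. hh q j (m + s)) has_sum
          ((-1)^j * q ^ (j*(j+1)) * q ^ (s*(2*j+1)) / (1 - q ^ (2*j+1)))) UNIV"
proof -
  have r: "0 \<le> q ^ (2*j+1)" "q ^ (2*j+1) < 1" using q qpow_lt1[OF q, of j] by auto
  have "((\<lambda>m. ((-1)^j * q ^ (j*(j+1)) * q ^ (s*(2*j+1))) * (q ^ (2*j+1)) ^ m) has_sum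
          ((-1)^j * q ^ (j*(j+1)) * q ^ (s*(2*j+1))) * (1 / (1 - q ^ (2*j+1)))) UNIV"
    by (rule has_sum_cmult_right[OF geo_has_sum[OF r]])
  moreover have "((-1)^j * q ^ (j*(j+1)) * q ^ (s*(2*j+1))) * (q ^ (2*j+1)) ^ m = hh q j (m + s)" for m
    unfolding hh_def by (simp add: power_mult[symmetric] power_add[symmetric] algebra_simps)
  ultimately show ?thesis by simp
qed

lemma hh_col_has_sum:
  fixes q :: real
  assumes q: "0 < q" "q < 1"
  shows "((\<lambda>j. hh q j m / 2) has_sum aa q (int m) 0) UNIV"
        "((\<lambda>j. hh q j m / 2) has_sum aa q (- int m) 0) UNIV"
proof -
  have b: "norm (norm (hh q j m / 2)) \<le> q ^ j * q ^ m" for j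
    using hh_bound[OF q, of j m] q by (simp add: zero_le_mult_iff)
  have gs: "summable (\<lambda>j. q ^ j * q ^ m)" using q by (intro summable_mult2 summable_geometric) auto
  have ns: "summable (\<lambda>j. norm (hh q j m / 2))"
    by (rule summable_comparison_test'[OF gs, of 0]) (rule b)
  show "((\<lambda>j. hh q j m / 2) has_sum aa q (int m) 0) UNIV"
    using norm_summable_imp_has_sum[OF ns] aa0_sums[OF q, of "int m"] by simp
  show "((\<lambda>j. hh q j m / 2) has_sum aa q (- int m) 0) UNIV"
    using norm_summable_imp_has_sum[OF ns] aa0_sums[OF q, of "- int m"] by simp
qed

definition uu :: "real \<Rightarrow> nat \<Rightarrow> nat \<Rightarrow> real" where
  "uu q s j = (-1)^j * q ^ (j*(j+1)) * q ^ (s*(2*j+1)) / (1 - q ^ (2*j+1))"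

lemma fubini_part:
  fixes q :: real
  assumes q: "0 < q" "q < 1"
  shows "(\<lambda>m. infsum (\<lambda>j. hh q j (m + s)) UNIV) summable_on UNIV"
        "infsum (\<lambda>m. infsum (\<lambda>j. hh q j (m + s)) UNIV) UNIV = infsum (uu q s) UNIV"
        "uu q s summable_on UNIV"
proof -
  have S: "(\<lambda>(m, j). hh q j (m + s)) summable_on (UNIV \<times> (UNIV :: nat set))"
    by (rule hh_summable2[OF q])
  show "(\<lambda>m. infsum (\<lambda>j. hh q j (m + s)) UNIV) summable_on UNIV"
    using summable_on_Sigma_banach[of "\<lambda>m j. hh q j (m + s)" UNIV "\<lambda>_. UNIV"] S by simp
  have S': "(\<lambda>(j, m). hh q j (m + s)) summable_on (UNIV \<times> (UNIV :: nat set))"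
    using iffD1[OF summable_on_swap S] by simp
  have rows: "infsum (\<lambda>m. hh q j (m + s)) UNIV = uu q s j" for j
    using hh_row[OF q, of j s] unfolding uu_def by (simp add: infsumI)
  have "infsum (\<lambda>m. infsum (\<lambda>j. hh q j (m + s)) UNIV) UNIV
        = infsum (\<lambda>j. infsum (\<lambda>m. hh q j (m + s)) UNIV) UNIV"
    by (rule infsum_swap_banach[OF S])
  also have "\<dots> = infsum (uu q s) UNIV" by (simp add: rows)
  finally show "infsum (\<lambda>m. infsum (\<lambda>j. hh q j (m + s)) UNIV) UNIV = infsum (uu q s) UNIV" .
  have "(\<lambda>j. infsum (\<lambda>m. hh q j (m + s)) UNIV) summable_on UNIV"
    using summable_on_Sigma_banach[of "\<lambda>j m. hh q j (m + s)" UNIV "\<lambda>_. UNIV"] S' by simp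
  thus "uu q s summable_on UNIV" by (simp add: rows)
qed

lemma aa_col:
  fixes q :: real
  assumes q: "0 < q" "q < 1"
  shows "aa q (- int m) 0 = infsum (\<lambda>j. hh q j (m + 0)) UNIV / 2"
        "aa q (int m + 1) 0 = infsum (\<lambda>j. hh q j (m + 1)) UNIV / 2"
proof -
  show "aa q (- int m) 0 = infsum (\<lambda>j. hh q j (m + 0)) UNIV / 2"
    using infsumI[OF hh_col_has_sum(2)[OF q, of m]] infsum_cmult_left'[of "\<lambda>j. hh q j m" "1/2" UNIV]
    by simp
  show "aa q (int m + 1) 0 = infsum (\<lambda>j. hh q j (m + 1)) UNIV / 2"
    using infsumI[OF hh_col_has_sum(1)[OF q, of "m+1"]] infsum_cmult_left'[of "\<lambda>j. hh q j (m+1)" "1/2" UNIV]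
    by (simp add: add.commute)
qed

lemma aa0_total:
  fixes q :: real
  assumes q: "0 < q" "q < 1"
  shows "(\<lambda>x. aa q x 0) summable_on (UNIV :: int set)"
        "infsum (\<lambda>x. aa q x 0) (UNIV :: int set) = (infsum (uu q 0) UNIV + infsum (uu q 1) UNIV) / 2"
proof -
  define g0 :: "nat \<Rightarrow> int" where "g0 = (\<lambda>m. - int m)"
  define g1 :: "nat \<Rightarrow> int" where "g1 = (\<lambda>m. int m + 1)"
  have inj0: "inj_on g0 UNIV" by (auto simp: g0_def inj_on_def)
  have inj1: "inj_on g1 UNIV" by (auto simp: g1_def inj_on_def)
  have U: "(UNIV :: int set) = g0 ` UNIV \<union> g1 ` UNIV"
  proof -
    have "x \<in> g0 ` UNIV \<union> g1 ` UNIV" for x :: int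
    proof (cases "x \<ge> 1")
      case True
      hence "x = g1 (nat (x - 1))" by (simp add: g1_def)
      thus ?thesis by blast
    next
      case False
      hence "x = g0 (nat (- x))" by (simp add: g0_def)
      thus ?thesis by blast
    qed
    thus ?thesis by auto
  qed
  have D: "g0 ` UNIV \<inter> g1 ` UNIV = {}" by (auto simp: g0_def g1_def)
  have c0: "(\<lambda>x. aa q x 0) \<circ> g0 = (\<lambda>m. (1/2) * infsum (\<lambda>j. hh q j (m + 0)) UNIV)"
    by (rule ext) (simp add: g0_def aa_col[OF q])
  have c1: "(\<lambda>x. aa q x 0) \<circ> g1 = (\<lambda>m. (1/2) * infsum (\<lambda>j. hh q j (m + 1)) UNIV)"
    by (rule ext) (simp add: g1_def aa_col[OF q])
  have s0: "(\<lambda>x. aa q x 0) summable_on g0 ` UNIV"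
    unfolding summable_on_reindex[OF inj0] c0
    by (rule summable_on_cmult_right[OF fubini_part(1)[OF q]])
  have s1: "(\<lambda>x. aa q x 0) summable_on g1 ` UNIV"
    unfolding summable_on_reindex[OF inj1] c1
    by (rule summable_on_cmult_right[OF fubini_part(1)[OF q]])
  show "(\<lambda>x. aa q x 0) summable_on (UNIV :: int set)"
    unfolding U by (rule summable_on_Un_disjoint[OF s0 s1 D])
  have "infsum (\<lambda>x. aa q x 0) (UNIV :: int set)
        = infsum (\<lambda>x. aa q x 0) (g0 ` UNIV) + infsum (\<lambda>x. aa q x 0) (g1 ` UNIV)"
    unfolding U by (rule infsum_Un_disjoint[OF s0 s1 D])
  also have "infsum (\<lambda>x. aa q x 0) (g0 ` UNIV) = (1/2) * infsum (uu q 0) UNIV"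
    unfolding infsum_reindex[OF inj0] c0 infsum_cmult_right' fubini_part(2)[OF q] ..
  also have "infsum (\<lambda>x. aa q x 0) (g1 ` UNIV) = (1/2) * infsum (uu q 1) UNIV"
    unfolding infsum_reindex[OF inj1] c1 infsum_cmult_right' fubini_part(2)[OF q] ..
  finally show "infsum (\<lambda>x. aa q x 0) (UNIV :: int set) = (infsum (uu q 0) UNIV + infsum (uu q 1) UNIV) / 2"
    by simp
qed

lemma target_eq:
  fixes q :: real
  assumes q: "0 < q" "q < 1"
  shows "(infsum (uu q 0) UNIV + infsum (uu q 1) UNIV) / 2 =
         (1/2) * (\<Sum>k. (-1) ^ k * q ^ (k * (k + 1)) * ((1 + q ^ (1 + 2 * k)) / (1 - q ^ (1 + 2 * k))))"
proof -
  have fun_eq: "(\<lambda>k. uu q 0 k + uu q 1 k) = (\<lambda>k. (-1) ^ k * q ^ (k * (k + 1)) * ((1 + q ^ (1 + 2 * k)) / (1 - q ^ (1 + 2 * k))))"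
  proof (rule ext)
    fix k
    define r where "r = q ^ (2*k+1)"
    define a where "a = (-1) ^ k * q ^ (k * (k + 1))"
    have r1: "r < 1" unfolding r_def by (rule qpow_lt1(1)[OF q])
    have u0: "uu q 0 k = a / (1 - r)" unfolding uu_def a_def r_def by simp
    have u1: "uu q 1 k = a * r / (1 - r)" unfolding uu_def a_def r_def by simp
    have rr: "q ^ (1 + 2 * k) = r" unfolding r_def by (simp add: add.commute)
    have "uu q 0 k + uu q 1 k = a * ((1 + r) / (1 - r))"
      unfolding u0 u1 by (simp add: add_divide_distrib[symmetric] distrib_left)
    thus "uu q 0 k + uu q 1 k = (-1) ^ k * q ^ (k * (k + 1)) * ((1 + q ^ (1 + 2 * k)) / (1 - q ^ (1 + 2 * k)))"
      unfolding rr a_def .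
  qed
  have sm: "(\<lambda>k. uu q 0 k + uu q 1 k) summable_on UNIV"
    by (rule summable_on_add) (rule fubini_part(3)[OF q])+
  have "infsum (uu q 0) UNIV + infsum (uu q 1) UNIV = infsum (\<lambda>k. uu q 0 k + uu q 1 k) UNIV"
    by (rule infsum_add[symmetric]) (rule fubini_part(3)[OF q])+
  also have "\<dots> = (\<Sum>k. (-1) ^ k * q ^ (k * (k + 1)) * ((1 + q ^ (1 + 2 * k)) / (1 - q ^ (1 + 2 * k))))"
    using has_sum_imp_sums[OF has_sum_infsum[OF sm]] unfolding fun_eq by (simp add: sums_iff)
  finally show ?thesis by simp
qed

theorem lemmaA:
  fixes q :: real
  assumes "0 < q" and "q < 1"
  shows "\<forall>n::int.
           (\<lambda>x. ip (ket q n) (S1 x (ket q (n - 1)))) summable_on (UNIV :: int set) \<and>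
           (\<Sum>\<^sub>\<infinity>x\<in>(UNIV :: int set). ip (ket q n) (S1 x (ket q (n - 1))))
             = (1/2) * (\<Sum>k. (-1) ^ k * q ^ (k * (k + 1)) *
                   ((1 + q ^ (1 + 2 * k)) / (1 - q ^ (1 + 2 * k))))"
proof
  fix n :: int
  have q: "0 < q" "q < 1" using assms by auto
  define V where "V = (1/2) * (\<Sum>k. (-1) ^ k * q ^ (k * (k + 1)) *
                   ((1 + q ^ (1 + 2 * k)) / (1 - q ^ (1 + 2 * k))))"
  define P where "P = (\<lambda>n. (\<lambda>x. aa q x n) summable_on (UNIV :: int set) \<and> infsum (\<lambda>x. aa q x n) UNIV = V)"
  have bij: "bij_betw (\<lambda>x::int. x - 1) UNIV UNIV"
    by (rule bij_betwI[where g="\<lambda>x. x + 1"]) auto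
  have step: "P (i + 1) = P i" for i
  proof -
    have e: "aa q x (i + 1) = aa q (x - 1) i" for x
      using aa_shift[OF q, of "x - 1" i] by simp
    have "((\<lambda>x. aa q x (i + 1)) summable_on UNIV) = ((\<lambda>x. aa q x i) summable_on UNIV)"
      unfolding e by (rule summable_on_reindex_bij_betw[OF bij])
    moreover have "infsum (\<lambda>x. aa q x (i + 1)) UNIV = infsum (\<lambda>x. aa q x i) UNIV"
      unfolding e by (rule infsum_reindex_bij_betw[OF bij])
    ultimately show ?thesis unfolding P_def by simp
  qed
  have P0: "P 0"
    unfolding P_def V_def using aa0_total[OF q] target_eq[OF q] by simp
  have "P n"
  proof (induction n rule: int_induct[where k=0])
    case base then show ?case by (rule P0)
  next
    case (step1 i) then show ?case using step[of i] by simp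
  next
    case (step2 i) then show ?case using step[of "i - 1"] by simp
  qed
  thus "(\<lambda>x. ip (ket q n) (S1 x (ket q (n - 1)))) summable_on (UNIV :: int set) \<and>
           (\<Sum>\<^sub>\<infinity>x\<in>(UNIV :: int set). ip (ket q n) (S1 x (ket q (n - 1))))
             = (1/2) * (\<Sum>k. (-1) ^ k * q ^ (k * (k + 1)) *
                   ((1 + q ^ (1 + 2 * k)) / (1 - q ^ (1 + 2 * k))))"
    unfolding P_def V_def aa_def by simp
qed


end
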